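(* Let $g:[0,1]\to\mathbb R$ be defined by $g(p)=\frac{1}{2+p}\bigl(1-\exp(-\frac{2+p}{p}\ln\frac1{1-p})\bigr)$ for $p\in(0,1)$, with $g(0)=\frac12(1-e^{-2})$ and $g(1)=\frac13$ (the limiting values). Then $$\inf_{\mu}\ \max\Bigl\{\int_{[0,1]}g(q)\,d\mu(q),\ \int_{[0,1]}q\,d\mu(q)\Bigr\}\ =\ \frac{3e^2-3}{7e^2-3}\approx0.3934,$$ where the infimum ranges over all probability measures $\mu$ on $[0,1]$. The infimum is attained by the measure that puts mass $\frac{3e^2-3}{7e^2-3}$ on the point $1$ and the remaining mass on the point $0$. *)

theory Defs
  imports "HOL-Probability.Probability"
begin

definition gfun :: "real \<Rightarrow> real" where
  "gfun p = (if p = 0 then (1 - exp (-2)) / 2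
             else if p = 1 then 1 / 3
             else 1 / (2 + p) * (1 - exp (- ((2 + p) / p) * ln (1 / (1 - p)))))"

definition prob_measures_01 :: "real measure set" where
  "prob_measures_01 = {M. prob_space M \<and> space M = {0..1}
                          \<and> sets M = sets (restrict_space borel {0..1})}"

definition objective :: "real measure \<Rightarrow> real" where
  "objective M = max (integral\<^sup>L M gfun) (integral\<^sup>L M (\<lambda>q. q))"

end

theory Submission imports Defs begin
lemma ln_bound: fixes p::real assumes "0 \<le> p" "p < 1" shows "ln (1 - p) \<le> - 2*p/(2-p)"
proof -
  define f where "f x = ln (1 - x) + 2*x/(2-x)" for x::real
  have d: "(f has_real_derivative (-1/(1-x) + 4/(2-x)^2)) (at x)" if "x < 1" for x
    unfolding f_def using that
    by (auto intro!: derivative_eq_intros simp: field_simps power2_eq_square)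
  have nonpos: "-1/(1-x) + 4/(2-x)^2 \<le> 0" if "x < 1" for x::real
  proof -
    have h1: "1 - x \<noteq> 0" "2 - x \<noteq> 0" using that by auto
    have "-1/(1-x) + 4/(2-x)^2 = -(x^2)/((1-x)*(2-x)^2)" using h1
      by (simp add: divide_simps) (simp add: algebra_simps power2_eq_square)
    also have "\<dots> \<le> 0" using that by (intro divide_nonpos_pos) auto
    finally show ?thesis .
  qed
  have "f p \<le> f 0"
    by (rule DERIV_nonpos_imp_nonincreasing[of 0 p f]) (use assms in simp, metis assms(2) d nonpos order_le_less_trans)
  then show ?thesis by (simp add: f_def)
qed

definition "aa = (1 - exp (-2::real)) / 2"

lemma E_ge: "exp (-2::real) \<ge> 1/9"
proof -
  have "exp (2::real) = exp 1 ^ 2" using exp_add[of "1::real" 1] by (simp add: power2_eq_square)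
  also have "\<dots> \<le> 3^2" using exp_le by (intro power_mono) auto
  finally have "exp (2::real) \<le> 9" by simp
  then show ?thesis by (simp add: exp_minus field_simps)
qed

lemma alg: fixes E p :: real assumes "0 < p"
  shows "(1 - E)/2 * (1 - p) + p / 3 = (1 - E * (1-p)^2 - (1-p)*p*(9*E-1)/6) / (2+p)"
proof -
  have "2 + p \<noteq> 0" using assms by auto
  then show ?thesis by (simp add: field_simps power2_eq_square)
qed
lemma X: fixes p :: real assumes "0 < p" "p < 1"
  shows "- ((2 + p) / p) * ln (1 / (1 - p)) = ln (1-p) * ((2-p)/p) + 2 * ln (1-p)"
proof -
  have "ln (1 / (1 - p)) = - ln (1-p)" using assms by (simp add: ln_div)
  moreover have "(2 + p) / p = (2-p)/p + 2" using assms by (simp add: field_simps)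
  ultimately show ?thesis using assms by (simp add: field_simps)
qed
lemma g_main: assumes "0 < p" "p < (1::real)"
  shows "gfun p \<ge> aa * (1 - p) + p / 3"
proof -
  define E where "E = exp (-2::real)"
  have lnb: "ln (1 - p) \<le> - 2*p/(2-p)" using ln_bound assms by auto
  have "ln (1-p) * ((2-p)/p) \<le> (- 2*p/(2-p)) * ((2-p)/p)"
    using assms lnb by (intro mult_right_mono) auto
  also have "\<dots> = -2" using assms by (simp add: field_simps)
  finally have A: "ln (1-p) * ((2-p)/p) \<le> -2" .
  have X': "- ((2 + p) / p) * ln (1 / (1 - p)) = ln (1-p) * ((2-p)/p) + 2 * ln (1-p)"
    using X assms by blast
  have "exp (- ((2 + p) / p) * ln (1 / (1 - p))) \<le> exp (-2 + 2 * ln (1-p))"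
    unfolding X' using A by simp
  also have "\<dots> = E * (1-p)^2" using assms
  proof -
    have "exp (-2 + 2 * ln (1-p)) = exp (-2) * (exp (ln (1-p)) * exp (ln (1-p)))"
      by (metis exp_add mult_2)
    then show ?thesis using assms by (simp add: E_def power2_eq_square)
  qed
  finally have U: "exp (- ((2 + p) / p) * ln (1 / (1 - p))) \<le> E * (1-p)^2" .
  have gp: "gfun p = (1 - exp (- ((2 + p) / p) * ln (1 / (1 - p)))) / (2+p)"
    using assms by (simp add: gfun_def)
  have "aa * (1 - p) + p / 3 = (1 - E * (1-p)^2 - (1-p)*p*(9*E-1)/6) / (2+p)"
    using alg assms unfolding aa_def E_def[symmetric] by blast
  also have "\<dots> \<le> (1 - E * (1-p)^2) / (2+p)"
    using assms E_ge unfolding E_def[symmetric]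
    by (intro divide_right_mono) (auto intro!: mult_nonneg_nonneg)
  also have "\<dots> \<le> gfun p" unfolding gp using U assms by (intro divide_right_mono) auto
  finally show ?thesis .
qed

lemma g_upper: assumes "0 \<le> p" "p \<le> (1::real)" shows "gfun p \<le> 1"
proof (cases "p = 0 \<or> p = 1")
  case True then show ?thesis by (auto simp: gfun_def) (smt (verit) exp_gt_zero)
next
  case False
  then have "gfun p = (1 - exp (- ((2 + p) / p) * ln (1 / (1 - p)))) / (2+p)"
    by (simp add: gfun_def)
  also have "\<dots> \<le> 1 / (2 + p)" using assms by (intro divide_right_mono) auto
  also have "\<dots> \<le> 1" using assms by simp
  finally show ?thesis .
qed

lemma aa_ge: "aa \<ge> 1/3"
proof -
  have "exp (2::real) \<ge> 3" using exp_ge_add_one_self[of "2::real"] by simp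
  then have "exp (-2::real) \<le> 1/3" by (simp add: exp_minus field_simps)
  then show ?thesis by (simp add: aa_def)
qed

lemma g_lin: assumes "0 \<le> p" "p \<le> (1::real)" shows "gfun p \<ge> aa * (1 - p) + p / 3"
proof (cases "p = 0 \<or> p = 1")
  case True then show ?thesis by (auto simp: gfun_def aa_def)
next
  case False then show ?thesis using g_main assms by auto
qed

lemma g_nonneg: assumes "0 \<le> p" "p \<le> (1::real)" shows "gfun p \<ge> 0"
proof -
  have "aa * (1 - p) + p / 3 \<ge> 0" using aa_ge assms by (intro add_nonneg_nonneg mult_nonneg_nonneg) auto
  then show ?thesis using g_lin[OF assms] by linarith
qed

lemma gfun_borel: "gfun \<in> borel_measurable borel"
  unfolding gfun_def by measurable

definition "cc = (3 * exp 2 - 3) / (7 * exp 2 - (3::real))"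

lemma cc_eq: "cc = aa - (aa - 1/3) * cc"
proof -
  have e: "exp (-2::real) = 1 / exp 2" by (simp add: exp_minus field_simps)
  have p: "7 * exp 2 - (3::real) > 0" using exp_ge_add_one_self[of "2::real"] by simp
  show ?thesis unfolding cc_def aa_def e using p by (simp add: field_simps)
qed

lemma cc_bounds: "0 \<le> cc" "cc \<le> 1"
proof -
  have "exp (2::real) \<ge> 3" using exp_ge_add_one_self[of "2::real"] by simp
  then show "0 \<le> cc" "cc \<le> 1" unfolding cc_def by (auto simp: field_simps)
qed

lemma lower: assumes "M \<in> prob_measures_01" shows "objective M \<ge> cc"
proof -
  have ps: "prob_space M" and sp: "space M = {0..1}" and ss: "sets M = sets (restrict_space borel {0..1::real})"
    using assms by (auto simp: prob_measures_01_def)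
  interpret prob_space M by (rule ps)
  have meq: "measurable M borel = measurable (restrict_space borel {0..1::real}) (borel :: real measure)"
    by (rule measurable_cong_sets[OF ss refl])
  have gm: "gfun \<in> borel_measurable M"
    unfolding meq by (rule measurable_restrict_space1[OF gfun_borel])
  have im: "(\<lambda>q. q) \<in> borel_measurable M"
    unfolding meq by (rule measurable_restrict_space1) simp
  have ig: "integrable M gfun"
    by (rule integrable_const_bound[of _ 1]) (use sp g_upper g_nonneg gm in auto)
  have ii: "integrable M (\<lambda>q. q)"
    by (rule integrable_const_bound[of _ 1]) (use sp im in auto)
  define m where "m = integral\<^sup>L M (\<lambda>q. q)"
  have il: "integrable M (\<lambda>q. aa * (1 - q) + q / 3)" using ii by auto
  have "integral\<^sup>L M (\<lambda>q. aa * (1 - q) + q / 3) \<le> integral\<^sup>L M gfun"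
    by (rule integral_mono[OF il ig]) (use sp g_lin in auto)
  moreover have "integral\<^sup>L M (\<lambda>q. aa * (1 - q) + q / 3) = aa * (1 - m) + m / 3"
    using ii by (simp add: m_def prob_space)
  ultimately have G: "integral\<^sup>L M gfun \<ge> aa * (1 - m) + m / 3" by simp
  show ?thesis
  proof (cases "m \<ge> cc")
    case True then show ?thesis by (simp add: objective_def m_def)
  next
    case False
    have "aa * (1 - m) + m / 3 - cc = (aa - 1/3) * (cc - m)"
    proof -
      have h: "aa - cc - aa*cc + cc/3 = 0" using cc_eq by (simp add: algebra_simps)
      have "aa * (1 - m) + m / 3 - cc - (aa - 1/3) * (cc - m) = aa - cc - aa*cc + cc/3"
        by (simp add: algebra_simps divide_simps)
      then show ?thesis using h by linarith
    qed
    also have "\<dots> \<ge> 0" using False aa_ge by auto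
    finally show ?thesis using G by (simp add: objective_def)
  qed
qed

theorem mainTheorem9:
  shows "(INF M\<in>prob_measures_01. objective M) = (3 * exp 2 - 3) / (7 * exp 2 - 3)
         \<and> (\<exists>M\<in>prob_measures_01.
               measure M {1} = (3 * exp 2 - 3) / (7 * exp 2 - 3)
             \<and> measure M {0} = 1 - (3 * exp 2 - 3) / (7 * exp 2 - 3)
             \<and> objective M = (3 * exp 2 - 3) / (7 * exp 2 - 3))"
proof -
  define f where "f b = (if b then 1 else (0::real))" for b
  define M0 where "M0 = distr (measure_pmf (bernoulli_pmf cc)) (restrict_space borel {0..1::real}) f"
  have fm: "f \<in> measurable (measure_pmf (bernoulli_pmf cc)) (restrict_space borel {0..1::real})"
    by (auto simp: f_def)
  have M0in: "M0 \<in> prob_measures_01"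
    unfolding prob_measures_01_def M0_def
    using measure_pmf.prob_space_distr[OF fm] by simp
  have m1: "measure M0 {1} = cc"
  proof -
    have "measure M0 {1} = measure (measure_pmf (bernoulli_pmf cc)) (f -` {1} \<inter> UNIV)"
      unfolding M0_def by (subst measure_distr[OF fm]) (auto simp: sets_restrict_space)
    also have "f -` {1} \<inter> UNIV = {True}" by (auto simp: f_def split: if_splits)
    finally show ?thesis using cc_bounds by (simp add: measure_pmf_single)
  qed
  have m0: "measure M0 {0} = 1 - cc"
  proof -
    have "measure M0 {0} = measure (measure_pmf (bernoulli_pmf cc)) (f -` {0} \<inter> UNIV)"
      unfolding M0_def by (subst measure_distr[OF fm]) (auto simp: sets_restrict_space)
    also have "f -` {0} \<inter> UNIV = {False}" by (auto simp: f_def split: if_splits)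
    finally show ?thesis using cc_bounds by (simp add: measure_pmf_single)
  qed
  have ig: "integral\<^sup>L M0 gfun = cc * (1/3) + (1 - cc) * aa"
    unfolding M0_def
    by (subst integral_distr[OF fm]) (auto intro: measurable_restrict_space1[OF gfun_borel]
          simp: cc_bounds f_def gfun_def aa_def)
  have ii: "integral\<^sup>L M0 (\<lambda>q. q) = cc"
    unfolding M0_def
    by (subst integral_distr[OF fm]) (auto intro: measurable_restrict_space1 simp: cc_bounds f_def)
  have obj: "objective M0 = cc"
  proof -
    have "cc * (1/3) + (1 - cc) * aa = cc" using cc_eq by (simp add: algebra_simps)
    then show ?thesis using ig ii by (simp add: objective_def)
  qed
  have inf: "(INF M\<in>prob_measures_01. objective M) = cc"
  proof (rule antisym)
    show "(INF M\<in>prob_measures_01. objective M) \<le> cc"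
      using cINF_lower[of objective prob_measures_01 M0] M0in obj lower
      by (metis bdd_belowI2)
    show "cc \<le> (INF M\<in>prob_measures_01. objective M)"
      using M0in lower by (intro cINF_greatest) auto
  qed
  show ?thesis using inf M0in m1 m0 obj unfolding cc_def by blast
qed
end
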